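(* Let $N$ be a natural number. For any $\delta\subseteq{}^{\underline N}2$ and $Z\subseteq N$, \[\mathrm{HN}\big(L(\delta,Z)\cup R(\delta,Z)\big)=\min\{\mathrm{HN}(L(\delta,Z)),\mathrm{HN}(R(\delta,Z))\}.\]
   Context: $N=\{0,\ldots,N-1\}$; ${}^{\underline N}2$ is the set of all partial functions $\sigma$ with $\mathrm{dom}(\sigma)\subseteq N$ and values in $\{0,1\}$ (the empty function included); $|\sigma|$ is the size of $\sigma$ (equivalently of its domain). For $\sigma\in{}^{\underline N}2$ and $Z\subseteq N$, $\sigma\restriction Z=\{(a,b)\in\sigma: a\in Z\}$. $L(\delta,Z)=\{\sigma\restriction Z:\sigma\in\delta,\ |\sigma\restriction Z|\geq|\sigma\restriction(N\setminus Z)|\}$ and $R(\delta,Z)=\{\sigma\restriction(N\setminus Z):\sigma\in\delta,\ |\sigma\restriction Z|<|\sigma\restriction(N\setminus Z)|\}$. For $\delta_1,\delta_2\subseteq{}^{\underline N}2$, $\delta_1\preceq\delta_2$ means that for every $\sigma\in\delta_1$ there is $\rho\in\delta_2$ with $\rho\subseteq\sigma$. For $\delta\subseteq{}^{\underline N}2$, $\mathrm{hn}(\delta)$ is the maximum of $k+1$ over those $k\in\{0,\ldots,N-1\}$ such that for every $\delta'\subseteq\delta$ there is $\delta''\subseteq\delta'$ whose elements have pairwise disjoint domains and $|\bigcup_{\sigma\in\delta''}\mathrm{dom}(\sigma)|\geq k|\delta'|$; and $\mathrm{HN}(\delta)=\max\{\mathrm{hn}(\delta'):\delta'\subseteq{}^{\underline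 N}2,\ \delta\preceq\delta'\}$. *)

theory Defs
  imports Main
begin

text \<open>Partial functions from N = {0..<N} to 2 = {0,1}, represented as maps
  nat \<rightharpoonup> bool (False = 0, True = 1) whose domain is contained in {..<N}.\<close>

definition PF :: "nat \<Rightarrow> (nat \<rightharpoonup> bool) set" where
  "PF N = {\<sigma>. dom \<sigma> \<subseteq> {..<N}}"

definition psize :: "(nat \<rightharpoonup> bool) \<Rightarrow> nat" where
  "psize \<sigma> = card (dom \<sigma>)"

definition Lset :: "nat \<Rightarrow> (nat \<rightharpoonup> bool) set \<Rightarrow> nat set \<Rightarrow> (nat \<rightharpoonup> bool) set" where
  "Lset N \<delta> Z = {\<sigma> |` Z | \<sigma>. \<sigma> \<in> \<delta> \<and>
       psize (\<sigma> |` Z) \<ge> psize (\<sigma> |` ({..<N} - Z))}"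

definition Rset :: "nat \<Rightarrow> (nat \<rightharpoonup> bool) set \<Rightarrow> nat set \<Rightarrow> (nat \<rightharpoonup> bool) set" where
  "Rset N \<delta> Z = {\<sigma> |` ({..<N} - Z) | \<sigma>. \<sigma> \<in> \<delta> \<and>
       psize (\<sigma> |` Z) < psize (\<sigma> |` ({..<N} - Z))}"

definition refines :: "(nat \<rightharpoonup> bool) set \<Rightarrow> (nat \<rightharpoonup> bool) set \<Rightarrow> bool" where
  "refines \<delta>1 \<delta>2 \<longleftrightarrow> (\<forall>\<sigma>\<in>\<delta>1. \<exists>\<rho>\<in>\<delta>2. \<rho> \<subseteq>\<^sub>m \<sigma>)"

definition hn_good :: "nat \<Rightarrow> (nat \<rightharpoonup> bool) set \<Rightarrow> bool" where
  "hn_good k \<delta> \<longleftrightarrow> (\<forall>\<delta>'\<subseteq>\<delta>. \<exists>\<delta>''\<subseteq>\<delta>'.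
      (\<forall>\<sigma>\<in>\<delta>''. \<forall>\<tau>\<in>\<delta>''. \<sigma> \<noteq> \<tau> \<longrightarrow> dom \<sigma> \<inter> dom \<tau> = {}) \<and>
      card (\<Union>\<sigma>\<in>\<delta>''. dom \<sigma>) \<ge> k * card \<delta>')"

text \<open>Max of k+1 over admissible k in {0..N-1}; 0 by convention if there is none (only when N = 0).\<close>
definition hn :: "nat \<Rightarrow> (nat \<rightharpoonup> bool) set \<Rightarrow> nat" where
  "hn N \<delta> = Max (insert 0 {k + 1 | k. k < N \<and> hn_good k \<delta>})"

definition HN :: "nat \<Rightarrow> (nat \<rightharpoonup> bool) set \<Rightarrow> nat" where
  "HN N \<delta> = Max {hn N \<delta>' | \<delta>'. \<delta>' \<subseteq> PF N \<and> refines \<delta> \<delta>'}"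

end

theory Submission
  imports Defs
begin

lemma hn_le: "hn N A \<le> N"
  unfolding hn_def
  by (rule Max.boundedI) (auto intro: finite_subset[of _ "{..N}"])

lemma fin_hnset: "finite (insert 0 {k + 1 | k. k < N \<and> hn_good k A})"
  by (rule finite_subset[of _ "{..N}"]) auto

lemma hn_ge: "k < N \<Longrightarrow> hn_good k A \<Longrightarrow> k + 1 \<le> hn N A"
  unfolding hn_def using fin_hnset[of N A] by (intro Max_ge) auto

lemma hn_cases: "hn N A = 0 \<or> (hn N A - 1 < N \<and> hn_good (hn N A - 1) A)"
proof -
  have "hn N A \<in> insert 0 {k + 1 | k. k < N \<and> hn_good k A}"
    unfolding hn_def using fin_hnset[of N A] by (intro Max_in) auto
  then show ?thesis by auto
qed

lemma hn_good_mono: "hn_good k B \<Longrightarrow> A \<subseteq> B \<Longrightarrow> hn_good k A"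
  unfolding hn_good_def by (meson order_trans)

lemma hn_good_le: "hn_good k A \<Longrightarrow> j \<le> k \<Longrightarrow> hn_good j A"
  unfolding hn_good_def
  by (meson le_trans mult_le_mono1)

lemma fin_HNset: "finite {hn N \<delta>' | \<delta>'. \<delta>' \<subseteq> PF N \<and> refines A \<delta>'}"
  by (rule finite_subset[of _ "{..N}"]) (auto simp: hn_le)

lemma refines_PF: "refines A (PF N)"
  unfolding refines_def PF_def by (auto intro!: bexI[of _ Map.empty])

lemma HN_in: "\<exists>\<delta>'. \<delta>' \<subseteq> PF N \<and> refines A \<delta>' \<and> HN N A = hn N \<delta>'"
proof -
  have "HN N A \<in> {hn N \<delta>' | \<delta>'. \<delta>' \<subseteq> PF N \<and> refines A \<delta>'}"
    unfolding HN_def using fin_HNset[of N A] refines_PF[of A N] by (intro Max_in) auto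
  then show ?thesis by auto
qed

lemma HN_ge: "\<delta>' \<subseteq> PF N \<Longrightarrow> refines A \<delta>' \<Longrightarrow> hn N \<delta>' \<le> HN N A"
  unfolding HN_def using fin_HNset[of N A] by (intro Max_ge) auto

lemma refines_trans: "refines A B \<Longrightarrow> refines B C \<Longrightarrow> refines A C"
  unfolding refines_def by (meson map_le_trans)

lemma refines_sub: "A \<subseteq> B \<Longrightarrow> refines A B"
  unfolding refines_def by (auto intro: map_le_refl)

lemma HN_anti: "refines A B \<Longrightarrow> HN N B \<le> HN N A"
proof -
  assume r: "refines A B"
  obtain d where d: "d \<subseteq> PF N" "refines B d" "HN N B = hn N d" using HN_in by blast
  show ?thesis using HN_ge[OF d(1) refines_trans[OF r d(2)]] d(3) by simp
qed

lemma good_union: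
  assumes gA: "hn_good k A" and gB: "hn_good k B"
    and dA: "\<forall>\<rho>\<in>A. dom \<rho> \<subseteq> Z" and dB: "\<forall>\<rho>\<in>B. dom \<rho> \<inter> Z = {}"
    and P: "A \<union> B \<subseteq> PF N"
  shows "hn_good k (A \<union> B)"
  unfolding hn_good_def
proof (intro allI impI)
  fix S assume S: "S \<subseteq> A \<union> B"
  obtain DA where DA: "DA \<subseteq> S \<inter> A"
    "\<forall>\<sigma>\<in>DA. \<forall>\<tau>\<in>DA. \<sigma> \<noteq> \<tau> \<longrightarrow> dom \<sigma> \<inter> dom \<tau> = {}"
    "card (\<Union>\<sigma>\<in>DA. dom \<sigma>) \<ge> k * card (S \<inter> A)"
    using gA unfolding hn_good_def by (meson inf_le2)
  obtain DB where DB: "DB \<subseteq> S \<inter> B"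
    "\<forall>\<sigma>\<in>DB. \<forall>\<tau>\<in>DB. \<sigma> \<noteq> \<tau> \<longrightarrow> dom \<sigma> \<inter> dom \<tau> = {}"
    "card (\<Union>\<sigma>\<in>DB. dom \<sigma>) \<ge> k * card (S \<inter> B)"
    using gB unfolding hn_good_def by (meson inf_le2)
  have UA: "(\<Union>\<sigma>\<in>DA. dom \<sigma>) \<subseteq> Z" using DA(1) dA by auto
  have UB: "(\<Union>\<sigma>\<in>DB. dom \<sigma>) \<inter> Z = {}" using DB(1) dB by auto
  have finA: "finite (\<Union>\<sigma>\<in>DA. dom \<sigma>)"
    proof (rule finite_subset[of _ "{..<N}"])
    have "DA \<subseteq> PF N" using DA(1) P by blast
    then show "(\<Union>\<sigma>\<in>DA. dom \<sigma>) \<subseteq> {..<N}" unfolding PF_def by blast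
  qed simp
  have finB: "finite (\<Union>\<sigma>\<in>DB. dom \<sigma>)"
    proof (rule finite_subset[of _ "{..<N}"])
    have "DB \<subseteq> PF N" using DB(1) P by blast
    then show "(\<Union>\<sigma>\<in>DB. dom \<sigma>) \<subseteq> {..<N}" unfolding PF_def by blast
  qed simp
  have disj: "\<forall>\<sigma>\<in>DA \<union> DB. \<forall>\<tau>\<in>DA \<union> DB. \<sigma> \<noteq> \<tau> \<longrightarrow> dom \<sigma> \<inter> dom \<tau> = {}"
  proof (intro ballI impI)
    fix \<sigma> \<tau> assume a: "\<sigma> \<in> DA \<union> DB" "\<tau> \<in> DA \<union> DB" "\<sigma> \<noteq> \<tau>"
    show "dom \<sigma> \<inter> dom \<tau> = {}"
      using a DA(2) DB(2) UA UB by blast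
  qed
  have eq: "(\<Union>\<sigma>\<in>DA \<union> DB. dom \<sigma>) = (\<Union>\<sigma>\<in>DA. dom \<sigma>) \<union> (\<Union>\<sigma>\<in>DB. dom \<sigma>)" by auto
  have c: "card (\<Union>\<sigma>\<in>DA \<union> DB. dom \<sigma>) = card (\<Union>\<sigma>\<in>DA. dom \<sigma>) + card (\<Union>\<sigma>\<in>DB. dom \<sigma>)"
    unfolding eq using UA UB finA finB by (intro card_Un_disjoint) auto
  have "card S \<le> card (S \<inter> A) + card (S \<inter> B)"
  proof -
    have "S = (S \<inter> A) \<union> (S \<inter> B)" using S by auto
    then have "card S = card ((S \<inter> A) \<union> (S \<inter> B))" by simp
    also have "\<dots> \<le> card (S \<inter> A) + card (S \<inter> B)" by (rule card_Un_le)
    finally show ?thesis .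
  qed
  then have "k * card S \<le> k * card (S \<inter> A) + k * card (S \<inter> B)"
    by (metis add_mult_distrib2 mult_le_mono2)
  then have "k * card S \<le> card (\<Union>\<sigma>\<in>DA \<union> DB. dom \<sigma>)" using c DA(3) DB(3) by linarith
  moreover have "DA \<union> DB \<subseteq> S" using DA(1) DB(1) by auto
  ultimately show "\<exists>\<delta>''\<subseteq>S. (\<forall>\<sigma>\<in>\<delta>''. \<forall>\<tau>\<in>\<delta>''. \<sigma> \<noteq> \<tau> \<longrightarrow> dom \<sigma> \<inter> dom \<tau> = {}) \<and>
      k * card S \<le> card (\<Union>\<sigma>\<in>\<delta>''. dom \<sigma>)" using disj by blast
qed

theorem theorem6p27:
  fixes N :: nat and \<delta> :: "(nat \<rightharpoonup> bool) set" and Z :: "nat set"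
  assumes "\<delta> \<subseteq> PF N" and "Z \<subseteq> {..<N}"
  shows "HN N (Lset N \<delta> Z \<union> Rset N \<delta> Z) = min (HN N (Lset N \<delta> Z)) (HN N (Rset N \<delta> Z))"
proof -
  define L where "L = Lset N \<delta> Z"
  define R where "R = Rset N \<delta> Z"
  have le: "HN N (L \<union> R) \<le> min (HN N L) (HN N R)"
    using HN_anti[OF refines_sub[of L "L \<union> R"]] HN_anti[OF refines_sub[of R "L \<union> R"]] by auto
  have domL: "\<forall>\<sigma>\<in>L. dom \<sigma> \<subseteq> Z"
  proof
    fix \<sigma> assume "\<sigma> \<in> L"
    then obtain \<sigma>' where "\<sigma> = \<sigma>' |` Z" unfolding L_def Lset_def by blast
    then show "dom \<sigma> \<subseteq> Z" by simp
  qed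
  have domR: "\<forall>\<sigma>\<in>R. dom \<sigma> \<inter> Z = {}"
  proof
    fix \<sigma> assume "\<sigma> \<in> R"
    then obtain \<sigma>' where "\<sigma> = \<sigma>' |` ({..<N} - Z)" unfolding R_def Rset_def by blast
    then show "dom \<sigma> \<inter> Z = {}" by auto
  qed
  obtain dL where dL: "dL \<subseteq> PF N" "refines L dL" "HN N L = hn N dL" using HN_in by blast
  obtain dR where dR: "dR \<subseteq> PF N" "refines R dR" "HN N R = hn N dR" using HN_in by blast
  define fL where "fL = {\<rho>\<in>dL. dom \<rho> \<subseteq> Z}"
  define fR where "fR = {\<rho>\<in>dR. dom \<rho> \<inter> Z = {}}"
  define m where "m = min (HN N L) (HN N R)"
  have ge: "m \<le> HN N (L \<union> R)"
  proof (cases "m = 0")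
    case True then show ?thesis by simp
  next
    case False
    define k where "k = m - 1"
    have gL: "hn_good k dL"
    proof -
      have "hn N dL \<noteq> 0" using False dL(3) unfolding m_def by auto
      then have "hn_good (hn N dL - 1) dL" using hn_cases[of N dL] by auto
      moreover have "k \<le> hn N dL - 1" using dL(3) unfolding m_def k_def by auto
      ultimately show ?thesis by (rule hn_good_le)
    qed
    have gR: "hn_good k dR"
    proof -
      have "hn N dR \<noteq> 0" using False dR(3) unfolding m_def by auto
      then have "hn_good (hn N dR - 1) dR" using hn_cases[of N dR] by auto
      moreover have "k \<le> hn N dR - 1" using dR(3) unfolding m_def k_def by auto
      ultimately show ?thesis by (rule hn_good_le)
    qed
    have kN: "k < N" using hn_le[of N dL] False dL(3) unfolding m_def k_def by auto
    have sub: "fL \<union> fR \<subseteq> PF N" using dL(1) dR(1) by (auto simp: fL_def fR_def)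
    have g1: "hn_good k fL" by (rule hn_good_mono[OF gL]) (auto simp: fL_def)
    have g2: "hn_good k fR" by (rule hn_good_mono[OF gR]) (auto simp: fR_def)
    have g: "hn_good k (fL \<union> fR)"
      by (rule good_union[OF g1 g2 _ _ sub, where Z=Z]) (auto simp: fL_def fR_def)
    have ref: "refines (L \<union> R) (fL \<union> fR)"
      unfolding refines_def
    proof
      fix \<sigma> assume s: "\<sigma> \<in> L \<union> R"
      show "\<exists>\<rho>\<in>fL \<union> fR. \<rho> \<subseteq>\<^sub>m \<sigma>"
      proof (cases "\<sigma> \<in> L")
        case True
        then obtain \<rho> where "\<rho> \<in> dL" "\<rho> \<subseteq>\<^sub>m \<sigma>" using dL(2) unfolding refines_def by blast
        moreover have "dom \<rho> \<subseteq> Z"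
          using map_le_implies_dom_le[OF \<open>\<rho> \<subseteq>\<^sub>m \<sigma>\<close>] bspec[OF domL True] by (rule order_trans)
        ultimately have "\<rho> \<in> fL" "\<rho> \<subseteq>\<^sub>m \<sigma>" unfolding fL_def by simp_all
        then show ?thesis by blast
      next
        case False
        then have "\<sigma> \<in> R" using s by blast
        then obtain \<rho> where "\<rho> \<in> dR" "\<rho> \<subseteq>\<^sub>m \<sigma>" using dR(2) unfolding refines_def by blast
        moreover have "dom \<rho> \<inter> Z = {}"
        proof -
          have "dom \<rho> \<subseteq> dom \<sigma>" using \<open>\<rho> \<subseteq>\<^sub>m \<sigma>\<close> by (rule map_le_implies_dom_le)
          moreover have "dom \<sigma> \<inter> Z = {}" using domR \<open>\<sigma> \<in> R\<close> by simp
          ultimately show ?thesis by auto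
        qed
        ultimately have "\<rho> \<in> fR" "\<rho> \<subseteq>\<^sub>m \<sigma>" unfolding fR_def by simp_all
        then show ?thesis by blast
      qed
    qed
    have "k + 1 \<le> hn N (fL \<union> fR)" by (rule hn_ge[OF kN g])
    also have "\<dots> \<le> HN N (L \<union> R)" by (rule HN_ge[OF sub ref])
    finally show ?thesis using False unfolding k_def by simp
  qed
  show ?thesis using le ge unfolding m_def L_def R_def by (simp add: min_def)
qed

end
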